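(* Let $p>1$, $N\ge1$ and $M\in\mathbb R$. If $u$ is a ground state of (E) with $u(0)=1$, then there exists a constant $c_{N,p,M}>0$ such that for all $r>0$, $u(r)\le\min\{1,c_{N,p,M}r^{-\frac{2}{p-1}}\}$ and $|u_r(r)|\le c_{N,p,M}r^{-\frac{p+1}{p-1}}$.
   Context: (E) denotes the ODE $-u_{rr}-\frac{N-1}{r}u_r=|u|^{p-1}u+M|u_r|^{\frac{2p}{p+1}}$ for $r>0$. A ground state is a nonnegative $u\in C^2([0,\infty))$ with $u_r(0)=0$ solving (E) on $(0,\infty)$. *)

theory Defs
  imports "HOL-Analysis.Analysis"
begin

definition ground_state :: "nat \<Rightarrow> real \<Rightarrow> real \<Rightarrow> (real \<Rightarrow> real) \<Rightarrow> bool" where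
  "ground_state N p M u \<longleftrightarrow>
     (\<forall>r\<ge>0. u r \<ge> 0) \<and>
     (\<exists>u1 u2.
        (\<forall>r\<ge>0. (u has_real_derivative u1 r) (at r within {0..})) \<and>
        (\<forall>r\<ge>0. (u1 has_real_derivative u2 r) (at r within {0..})) \<and>
        continuous_on {0..} u2 \<and>
        u1 0 = 0 \<and>
        (\<forall>r>0. - u2 r - (real N - 1) / r * u1 r
                 = \<bar>u r\<bar> powr (p - 1) * u r + M * \<bar>u1 r\<bar> powr (2 * p / (p + 1))))"

end

theory Submission
  imports Defs
begin


lemma crossing:
  fixes f f' :: "real \<Rightarrow> real"
  assumes ab: "a \<le> b" and cont: "continuous_on {a..b} f"
    and der: "\<And>x. a < x \<Longrightarrow> x < b \<Longrightarrow> (f has_real_derivative f' x) (at x)"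
    and pos: "\<And>x. a < x \<Longrightarrow> x < b \<Longrightarrow> f x < K \<Longrightarrow> f' x \<ge> 0"
    and fb: "f b < K"
  shows "f a < K"
proof (rule ccontr)
  assume "\<not> f a < K"
  define S where "S = {a..b} \<inter> f -` {K..}"
  have cS: "closed S" unfolding S_def by (rule continuous_closed_preimage[OF cont]) auto
  have aS: "a \<in> S" using \<open>\<not> f a < K\<close> ab by (auto simp: S_def)
  have bdd: "bdd_above S" unfolding S_def by (rule bdd_aboveI[of _ b]) auto
  define s where "s = Sup S"
  have sS: "s \<in> S" unfolding s_def using closed_contains_Sup[OF _ bdd cS] aS by auto
  have as: "a \<le> s" unfolding s_def using aS bdd by (simp add: cSup_upper)
  have sb: "s \<le> b" using sS by (auto simp: S_def)
  have fs: "f s \<ge> K" using sS by (auto simp: S_def)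
  have after: "f x < K" if "s < x" "x \<le> b" for x
  proof (rule ccontr)
    assume "\<not> f x < K"
    then have "x \<in> S" using that as by (auto simp: S_def)
    then have "x \<le> s" unfolding s_def using bdd by (simp add: cSup_upper)
    with that show False by simp
  qed
  have "f s \<le> f b"
  proof (rule DERIV_nonneg_imp_increasing_open[OF sb])
    fix x assume "s < x" "x < b"
    then show "\<exists>y. (f has_real_derivative y) (at x) \<and> 0 \<le> y"
      using der pos after as by (intro exI[of _ "f' x"]) auto
  next
    show "continuous_on {s..b} f" by (rule continuous_on_subset[OF cont]) (use as in auto)
  qed
  with fs fb show False by simp
qed

lemma powr_split1: "0 < (x::real) \<Longrightarrow> x powr a = x powr (a - 1) * x"
proof -
  assume x: "0 < x"
  have "x powr a = x powr ((a - 1) + 1)" by simp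
  also have "\<dots> = x powr (a - 1) * x powr 1" by (rule powr_add)
  finally show ?thesis using x by simp
qed

locale gs =
  fixes N :: nat and p M :: real and u u1 u2 :: "real \<Rightarrow> real"
  assumes p_gt: "p > 1" and N_ge: "N \<ge> 1"
    and unn: "\<And>r. 0 \<le> r \<Longrightarrow> 0 \<le> u r"
    and d1: "\<And>r. 0 \<le> r \<Longrightarrow> (u has_real_derivative u1 r) (at r within {0..})"
    and d2: "\<And>r. 0 \<le> r \<Longrightarrow> (u1 has_real_derivative u2 r) (at r within {0..})"
    and u10: "u1 0 = 0"
    and ode: "\<And>r. 0 < r \<Longrightarrow> - u2 r - (real N - 1) / r * u1 r
                 = \<bar>u r\<bar> powr (p - 1) * u r + M * \<bar>u1 r\<bar> powr (2 * p / (p + 1))"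
    and u0: "u 0 = 1"
begin

definition "q = 2 * p / (p + 1)"

lemma q_gt: "q > 1" using p_gt by (simp add: q_def field_simps)

lemma D1: "0 < r \<Longrightarrow> (u has_real_derivative u1 r) (at r)"
proof -
  assume r: "0 < r"
  have sub: "{0<..} \<subseteq> {0::real..}" by auto
  have "(u has_real_derivative u1 r) (at r within {0<..})"
    using has_field_derivative_subset[OF d1 sub] r by simp
  moreover have "at r within {0<..} = at r" using r by (intro at_within_open) auto
  ultimately show ?thesis by simp
qed

lemma D2: "0 < r \<Longrightarrow> (u1 has_real_derivative u2 r) (at r)"
proof -
  assume r: "0 < r"
  have sub: "{0<..} \<subseteq> {0::real..}" by auto
  have "(u1 has_real_derivative u2 r) (at r within {0<..})"
    using has_field_derivative_subset[OF d2 sub] r by simp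
  moreover have "at r within {0<..} = at r" using r by (intro at_within_open) auto
  ultimately show ?thesis by simp
qed

lemma cont_u: "continuous_on {0..} u"
  unfolding continuous_on_eq_continuous_within using DERIV_continuous[OF d1] by auto

lemma cont_u1: "continuous_on {0..} u1"
  unfolding continuous_on_eq_continuous_within using DERIV_continuous[OF d2] by auto

lemma pow_eq: "0 \<le> r \<Longrightarrow> \<bar>u r\<bar> powr (p - 1) * u r = u r powr p"
proof -
  assume r: "0 \<le> r"
  show ?thesis
  proof (cases "u r = 0")
    case True then show ?thesis using p_gt by simp
  next
    case False
    then have pos: "u r > 0" using unn[OF r] by simp
    have "u r powr p = u r powr ((p - 1) + 1)" by simp
    also have "\<dots> = u r powr (p - 1) * u r powr 1" by (rule powr_add)
    also have "\<dots> = u r powr (p - 1) * u r" using pos by simp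
    finally show ?thesis using pos by simp
  qed
qed

lemma u2_eq: "0 < r \<Longrightarrow> u2 r = - (real N - 1) / r * u1 r - u r powr p - M * \<bar>u1 r\<bar> powr q"
proof -
  assume r: "0 < r"
  have e: "- u2 r - (real N - 1) / r * u1 r = u r powr p + M * \<bar>u1 r\<bar> powr q"
    using ode[OF r] pow_eq[of r] r by (simp add: q_def)
  then show ?thesis by linarith
qed

lemma u1_nonpos: "0 \<le> r \<Longrightarrow> u1 r \<le> 0"
proof (rule ccontr)
  assume r: "0 \<le> r" and "\<not> u1 r \<le> 0"
  then have pos: "u1 r > 0" by simp
  with u10 have r0: "r > 0" using r by (cases "r = 0") auto
  obtain x0 where x0: "x0 \<in> {0..r}" "\<And>y. y \<in> {0..r} \<Longrightarrow> \<bar>u1 y\<bar> \<le> \<bar>u1 x0\<bar>"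
  proof -
    have "continuous_on {0..r} u1" by (rule continuous_on_subset[OF cont_u1]) auto
    then have "continuous_on {0..r} (\<lambda>x. \<bar>u1 x\<bar>)" by (intro continuous_intros)
    then show ?thesis using continuous_attains_sup[of "{0..r}" "\<lambda>x. \<bar>u1 x\<bar>"] r that by auto
  qed
  define B where "B = \<bar>u1 x0\<bar>"
  define L where "L = \<bar>M\<bar> * B powr (q - 1)"
  define f where "f = (\<lambda>s. - (u1 s * exp (- L * s)))"
  have "f 0 < 0"
  proof (rule crossing[where f=f and a=0 and b=r and K=0 and f' = "\<lambda>s. - ((u2 s - L * u1 s) * exp (- L * s))"])
    show "0 \<le> r" using r .
    have "continuous_on {0..r} u1" by (rule continuous_on_subset[OF cont_u1]) auto
    then show "continuous_on {0..r} f" unfolding f_def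
      by (intro continuous_intros)
  next
    fix x assume x: "0 < x" "x < r"
    have ex: "((\<lambda>s. exp (- L * s)) has_real_derivative (exp (- L * x) * (- L))) (at x)"
      by (auto intro!: derivative_eq_intros)
    have "((\<lambda>s. u1 s * exp (- L * s)) has_real_derivative
           (u2 x * exp (- L * x) + exp (- L * x) * (- L) * u1 x)) (at x)"
      by (rule DERIV_mult[OF D2[OF x(1)] ex])
    then have "((\<lambda>s. - (u1 s * exp (- L * s))) has_real_derivative
           - (u2 x * exp (- L * x) + exp (- L * x) * (- L) * u1 x)) (at x)"
      by (rule DERIV_minus)
    then show "(f has_real_derivative - ((u2 x - L * u1 x) * exp (- L * x))) (at x)"
      unfolding f_def by (rule DERIV_cong) (simp add: algebra_simps)
  next
    fix x assume x: "0 < x" "x < r"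
    assume "f x < 0"
    then have ux: "u1 x > 0" unfolding f_def by (simp add: zero_less_mult_iff)
    have "u1 x powr q = u1 x powr (q - 1) * u1 x" using ux by (rule powr_split1)
    also have "\<dots> \<le> B powr (q - 1) * u1 x"
      using x0(2)[of x] x ux q_gt by (intro mult_right_mono powr_mono2) (auto simp: B_def)
    finally have uq: "u1 x powr q \<le> B powr (q - 1) * u1 x" .
    have "u2 x = - (real N - 1) / x * u1 x - u x powr p - M * \<bar>u1 x\<bar> powr q" using u2_eq x by simp
    also have "\<dots> \<le> \<bar>M\<bar> * u1 x powr q"
    proof -
      have a: "(real N - 1) / x * u1 x \<ge> 0" using N_ge x ux by (intro mult_nonneg_nonneg divide_nonneg_pos) auto
      have b: "u x powr p \<ge> 0" by simp
      have c: "- M * u1 x powr q \<le> \<bar>M\<bar> * u1 x powr q" by (intro mult_right_mono) auto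
      have d: "\<bar>u1 x\<bar> = u1 x" using ux by simp
      show ?thesis using a b c unfolding d by linarith
    qed
    also have "\<dots> \<le> L * u1 x" using uq unfolding L_def by (simp add: mult_left_mono mult.assoc)
    finally show "0 \<le> - ((u2 x - L * u1 x) * exp (- L * x))"
      by (simp add: mult_nonpos_nonneg)
  next
    show "f r < 0" using pos unfolding f_def by simp
  qed
  then show False unfolding f_def using u10 by simp
qed

lemma u_mono: "0 \<le> s \<Longrightarrow> s \<le> t \<Longrightarrow> u t \<le> u s"
proof -
  assume st: "0 \<le> s" "s \<le> t"
  show ?thesis
  proof (rule DERIV_nonpos_imp_decreasing_open[OF st(2)])
    fix x assume "s < x" "x < t"
    then show "\<exists>y. (u has_real_derivative y) (at x) \<and> y \<le> 0"
      using st D1 u1_nonpos by (intro exI[of _ "u1 x"]) auto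
  next
    show "continuous_on {s..t} u" by (rule continuous_on_subset[OF cont_u]) (use st in auto)
  qed
qed

lemma u_le1: "0 \<le> r \<Longrightarrow> u r \<le> 1"
  using u_mono[of 0 r] u0 by simp

definition "bb = 2 / (p - 1)"
definition "gg = (p - 1) / 2"
definition "mm = \<bar>M\<bar>"
definition "cc = 1 / (4 * mm + 4)"
definition "L0 = 4 * 2 powr bb / cc + 8 * real N * cc + 1"
definition "A0 = L0 powr bb"

lemma bb_pos: "bb > 0" using p_gt by (simp add: bb_def)
lemma gg_pos: "gg > 0" using p_gt by (simp add: gg_def)
lemma bbgg: "bb * gg = 1" using p_gt by (simp add: bb_def gg_def)
lemma p_gg: "p = gg + gg + 1" by (simp add: gg_def)
lemma ggq: "(gg + 1) * q = p" using p_gt by (simp add: gg_def q_def field_simps)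
lemma cc_pos: "cc > 0" by (simp add: cc_def mm_def add_pos_nonneg)
lemma cc_le1: "cc \<le> 1" by (simp add: cc_def mm_def)
lemma mcc: "mm * cc \<le> 1 / 4" by (simp add: cc_def mm_def field_simps)
lemma L0_ge1: "L0 \<ge> 1" using cc_pos by (simp add: L0_def)
lemma A0_ge1: "A0 \<ge> 1" unfolding A0_def using L0_ge1 bb_pos by (simp add: ge_one_powr_ge_zero)

lemma no_big:
  assumes rs: "0 < rs" and U: "U = u rs" "0 < U"
    and lam: "L0 \<le> rs * U powr gg"
    and hb: "\<And>b. rs / 2 \<le> b \<Longrightarrow> b \<le> rs \<Longrightarrow> u b * b powr bb \<le> U * rs powr bb"
  shows False
proof -
  define lam where "lam = rs * U powr gg"
  define V where "V = cc * U powr gg * U"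
  define P where "P = U powr p"
  have Ugg: "U powr gg > 0" using U by simp
  have P: "P = U powr gg * U powr gg * U"
  proof -
    have "P = U powr (gg + gg + 1)" unfolding P_def using p_gg by simp
    also have "\<dots> = U powr gg * U powr gg * U powr 1" by (simp only: powr_add)
    finally show ?thesis using U by simp
  qed
  have Ppos: "P > 0" unfolding P_def using U by simp
  have lampos: "lam > 0" unfolding lam_def using rs Ugg by simp
  have lam1: "lam \<ge> 8 * real N * cc" using lam cc_pos unfolding lam_def L0_def
    by (smt (verit) divide_nonneg_pos powr_ge_zero)
  have lam2: "lam > 4 * 2 powr bb / cc" using lam cc_pos N_ge unfolding lam_def L0_def
    by (smt (verit) mult_nonneg_nonneg of_nat_0_le_iff)
  define tau where "tau = 2 * V / P"
  have tau: "tau = 2 * cc * rs / lam"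
    unfolding tau_def V_def P lam_def using Ugg U rs by (simp add: field_simps)
  have taupos: "tau > 0" using tau cc_pos rs lampos by simp
  have tau_le: "tau * (4 * real N) \<le> rs"
  proof -
    have "tau * (4 * real N) = 8 * real N * cc * rs / lam" using tau by simp
    also have "\<dots> \<le> lam * rs / lam"
      using lam1 rs lampos by (intro divide_right_mono mult_right_mono) auto
    also have "\<dots> = rs" using lampos by simp
    finally show ?thesis .
  qed
  have tau_le': "tau \<le> rs / 4"
  proof -
    have "tau * 4 \<le> tau * (4 * real N)" using N_ge taupos by (intro mult_left_mono) auto
    then show ?thesis using tau_le by simp
  qed
  define a where "a = rs / 2"
  define b where "b = a + tau"
  have ab: "a < b" "b \<le> 3 * rs / 4" using taupos tau_le' by (auto simp: a_def b_def)
  have V_tau: "V = tau * P / 2" unfolding tau_def using Ppos by simp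
  have Vpos: "V > 0" unfolding V_tau using taupos Ppos by simp
  have Vq: "mm * V powr q \<le> P / 4"
  proof -
    have "V powr q = (cc * U powr (gg + 1)) powr q"
      unfolding V_def using U by (simp add: powr_add mult.assoc)
    also have "\<dots> = cc powr q * U powr ((gg + 1) * q)"
      using cc_pos U by (simp add: powr_mult powr_powr)
    also have "\<dots> = cc powr q * P" unfolding P_def ggq ..
    finally have "V powr q = cc powr q * P" .
    moreover have "cc powr q \<le> cc"
      using powr_mono'[of 1 q cc] cc_pos cc_le1 q_gt by simp
    ultimately have "mm * V powr q \<le> mm * cc * P"
      using Ppos by (simp add: mm_def mult_left_mono mult_right_mono mult.assoc)
    also have "\<dots> \<le> P / 4" using mcc Ppos by (simp add: mult_right_mono)
    finally show ?thesis by simp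
  qed
  have NV: "(real N - 1) * V * 2 / rs \<le> P / 4"
  proof -
    have "(real N - 1) * V * 2 / rs = (real N - 1) * tau * P / rs" using V_tau by simp
    also have "\<dots> \<le> (real N * tau) * P / rs"
      using taupos Ppos rs by (intro divide_right_mono mult_right_mono) auto
    also have "\<dots> \<le> (rs / 4) * P / rs"
      using tau_le Ppos rs by (intro divide_right_mono mult_right_mono) (auto simp: field_simps)
    also have "\<dots> = P / 4" using rs by simp
    finally show ?thesis .
  qed
  have lowbound: "- u2 s \<ge> P / 2" if s: "a < s" "s < rs" "- u1 s < V" for s
  proof -
    have s0: "0 < s" using s rs by (simp add: a_def)
    have u1n: "u1 s \<le> 0" using u1_nonpos s0 by simp
    have us: "u s powr p \<ge> P" unfolding P_def U
      using u_mono[of s rs] s0 s p_gt unn[of rs] by (intro powr_mono2) auto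
    have t1: "(real N - 1) / s * u1 s \<ge> - ((real N - 1) * V * 2 / rs)"
    proof -
      have "- ((real N - 1) / s * u1 s) = (real N - 1) * (- u1 s) / s" by simp
      also have "\<dots> \<le> (real N - 1) * V / s"
        using s N_ge s0 u1n by (intro divide_right_mono mult_left_mono) auto
      also have "\<dots> \<le> (real N - 1) * V / (rs / 2)"
        using s N_ge s0 Vpos by (intro divide_left_mono mult_nonneg_nonneg) (auto simp: a_def)
      finally show ?thesis by simp
    qed
    have t2: "M * \<bar>u1 s\<bar> powr q \<ge> - (mm * V powr q)"
    proof -
      have "\<bar>u1 s\<bar> powr q \<le> V powr q" using s u1n q_gt by (intro powr_mono2) auto
      then have "mm * \<bar>u1 s\<bar> powr q \<le> mm * V powr q" by (simp add: mm_def mult_left_mono)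
      moreover have "- (mm * \<bar>u1 s\<bar> powr q) \<le> M * \<bar>u1 s\<bar> powr q"
        unfolding mm_def by (simp add: abs_if mult_right_mono)
      ultimately show ?thesis by linarith
    qed
    have "- u2 s = (real N - 1) / s * u1 s + u s powr p + M * \<bar>u1 s\<bar> powr q"
    proof -
      have "- (real N - 1) / s * u1 s = - ((real N - 1) / s * u1 s)" by (simp only: minus_divide_left[symmetric] mult_minus_left)
      then show ?thesis using u2_eq[OF s0] by linarith
    qed
    then show ?thesis using t1 t2 us NV Vq by linarith
  qed
  have vbig: "- u1 s0 \<ge> V" if s0: "b \<le> s0" "s0 \<le> rs" for s0
  proof (rule ccontr)
    assume "\<not> - u1 s0 \<ge> V"
    then have lt: "- u1 s0 < V" by simp
    have all: "- u1 x < V" if x: "a \<le> x" "x \<le> s0" for x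
    proof (rule crossing[where f = "\<lambda>s. - u1 s" and f' = "\<lambda>s. - u2 s" and a = x and b = s0 and K = V])
      show "x \<le> s0" using x by simp
      show "continuous_on {x..s0} (\<lambda>s. - u1 s)"
        by (intro continuous_intros continuous_on_subset[OF cont_u1]) (use x rs in \<open>auto simp: a_def\<close>)
    next
      fix y assume y: "x < y" "y < s0"
      then have "0 < y" using x rs by (simp add: a_def)
      then show "((\<lambda>s. - u1 s) has_real_derivative - u2 y) (at y)" by (intro DERIV_minus D2)
    next
      fix y assume y: "x < y" "y < s0" "- u1 y < V"
      then show "0 \<le> - u2 y" using lowbound[of y] x s0 Ppos by fastforce
    next
      show "- u1 s0 < V" using lt .
    qed
    have "(\<lambda>s. - u1 s - P / 2 * s) a \<le> (\<lambda>s. - u1 s - P / 2 * s) s0"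
    proof (rule DERIV_nonneg_imp_increasing_open[where f = "\<lambda>s. - u1 s - P / 2 * s"])
      show "a \<le> s0" using s0 ab by simp
      fix y assume y: "a < y" "y < s0"
      then have y0: "0 < y" using rs by (simp add: a_def)
      have "((\<lambda>s. - u1 s - P / 2 * s) has_real_derivative (- u2 y - P / 2 * 1)) (at y)"
        by (intro DERIV_diff DERIV_minus D2[OF y0] DERIV_cmult DERIV_ident)
      moreover have "- u2 y - P / 2 * 1 \<ge> 0" using lowbound[of y] all[of y] y s0 by simp
      ultimately show "\<exists>d. ((\<lambda>s. - u1 s - P / 2 * s) has_real_derivative d) (at y) \<and> 0 \<le> d" by blast
    next
      show "continuous_on {a..s0} (\<lambda>s. - u1 s - P / 2 * s)"
        by (intro continuous_intros continuous_on_subset[OF cont_u1]) (use rs in \<open>auto simp: a_def\<close>)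
    qed
    then have "- u1 s0 \<ge> - u1 a + P / 2 * (s0 - a)" by (simp add: algebra_simps diff_divide_distrib)
    moreover have "- u1 a \<ge> 0" using u1_nonpos[of a] rs by (simp add: a_def)
    moreover have "P / 2 * (s0 - a) \<ge> P / 2 * tau"
      using s0 Ppos by (intro mult_left_mono) (auto simp: b_def)
    ultimately have "- u1 s0 \<ge> P / 2 * tau" by linarith
    moreover have "P / 2 * tau = V" using V_tau by simp
    ultimately have "- u1 s0 \<ge> V" by simp
    with lt show False by simp
  qed
  have "(\<lambda>s. u s + V * s) rs \<le> (\<lambda>s. u s + V * s) b"
  proof (rule DERIV_nonpos_imp_decreasing_open[where f = "\<lambda>s. u s + V * s"])
    show "b \<le> rs" using ab rs by simp
    fix y assume y: "b < y" "y < rs"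
    then have y0: "0 < y" using ab rs by (simp add: a_def)
    have "((\<lambda>s. u s + V * s) has_real_derivative (u1 y + V * 1)) (at y)"
      by (intro DERIV_add D1[OF y0] DERIV_cmult DERIV_ident)
    moreover have "u1 y + V * 1 \<le> 0" using vbig[of y] y by simp
    ultimately show "\<exists>d. ((\<lambda>s. u s + V * s) has_real_derivative d) (at y) \<and> d \<le> 0" by blast
  next
    show "continuous_on {b..rs} (\<lambda>s. u s + V * s)"
      by (intro continuous_intros continuous_on_subset[OF cont_u]) (use ab rs in \<open>auto simp: a_def\<close>)
  qed
  then have hh: "U + V * (rs - b) \<le> u b" using U by (simp add: algebra_simps)
  have b0: "b > 0" using ab rs by (simp add: a_def)
  have "u b \<le> U * rs powr bb / b powr bb"
    using hb[of b] ab b0 by (simp add: a_def field_simps)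
  also have "\<dots> = U * (rs / b) powr bb" using rs b0 by (simp add: powr_divide)
  also have "\<dots> \<le> U * 2 powr bb"
    using U ab rs b0 bb_pos by (intro mult_left_mono powr_mono2) (auto simp: a_def field_simps)
  finally have "U + V * (rs - b) \<le> U * 2 powr bb" using hh by simp
  moreover have "V * (rs / 4) \<le> V * (rs - b)" using ab Vpos by (intro mult_left_mono) auto
  ultimately have "V * rs \<le> 4 * U * 2 powr bb" using U by simp
  moreover have "V * rs = cc * lam * U" unfolding V_def lam_def by simp
  ultimately have "cc * lam * U \<le> 4 * 2 powr bb * U" by (simp add: mult_ac)
  then have "cc * lam \<le> 4 * 2 powr bb" using U by simp
  then have "lam \<le> 4 * 2 powr bb / cc" using cc_pos by (simp add: field_simps)
  with lam2 show False by simp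
qed

lemma u_bound: "0 < r \<Longrightarrow> u r \<le> A0 * r powr (- bb)"
proof -
  assume r: "0 < r"
  show ?thesis
  proof (cases "r \<le> 1")
    case True
    have "r powr bb \<le> 1" using True r bb_pos by (intro powr_le1) auto
    then have "1 \<le> r powr (- bb)" using r by (simp add: powr_minus field_simps)
    then have "1 \<le> A0 * r powr (- bb)" using A0_ge1
      by (metis dual_order.trans mult_le_cancel_right1 mult.commute powr_ge_zero order.strict_iff_not)
    then show ?thesis using u_le1[of r] r by simp
  next
    case False
    then have r1: "1 < r" by simp
    define w where "w = (\<lambda>s. u s * s powr bb)"
    have cw: "continuous_on {1..r} w"
    proof -
      have "continuous_on {1..r} u" by (rule continuous_on_subset[OF cont_u]) auto
      moreover have "continuous_on {1..r} (\<lambda>s. s powr bb)"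
        by (intro continuous_intros) auto
      ultimately show ?thesis unfolding w_def by (rule continuous_on_mult)
    qed
    obtain rs where rs: "rs \<in> {1..r}" "\<And>y. y \<in> {1..r} \<Longrightarrow> w y \<le> w rs"
      using continuous_attains_sup[OF _ _ cw] r1 by auto
    show ?thesis
    proof (rule ccontr)
      assume "\<not> ?thesis"
      then have "u r > A0 * r powr (- bb)" by simp
      then have "u r * r powr bb > A0 * r powr (- bb) * r powr bb"
        using r by (intro mult_strict_right_mono) auto
      moreover have "r powr (- bb) * r powr bb = 1" using r by (simp add: powr_minus)
      ultimately have wr: "w r > A0" unfolding w_def by (simp add: mult.assoc)
      have wrs: "w rs > A0" using rs(2)[of r] wr r1 by simp
      have rs0: "rs > 0" using rs by simp
      define U where "U = u rs"
      have U0: "U > 0"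
      proof -
        have "w rs > 0" using wrs A0_ge1 by simp
        then show ?thesis unfolding w_def U_def using unn[of rs] rs0
          by (simp add: zero_less_mult_iff)
      qed
      have "(w rs) powr gg = U powr gg * rs powr (bb * gg)"
        unfolding w_def U_def using U0 rs0 by (simp add: powr_mult powr_powr U_def)
      then have wgg: "(w rs) powr gg = rs * U powr gg" using bbgg rs0 by simp
      have "A0 powr gg = L0" unfolding A0_def using L0_ge1 bbgg by (simp add: powr_powr)
      moreover have "A0 powr gg < (w rs) powr gg"
        using wrs A0_ge1 gg_pos by (intro powr_less_mono2) auto
      ultimately have lam: "L0 \<le> rs * U powr gg" using wgg by simp
      show False
      proof (rule no_big[OF rs0 _ U0 lam])
        show "U = u rs" by (simp add: U_def)
        fix b assume b: "rs / 2 \<le> b" "b \<le> rs"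
        show "u b * b powr bb \<le> U * rs powr bb"
        proof (cases "1 \<le> b")
          case True
          then have "w b \<le> w rs" using rs b by auto
          then show ?thesis unfolding w_def U_def .
        next
          case False
          have b0: "0 < b" using b rs0 by simp
          have "u b \<le> 1" using u_le1 b0 by simp
          moreover have "b powr bb \<le> 1" using False b0 bb_pos by (intro powr_le1) auto
          ultimately have "u b * b powr bb \<le> 1"
            using unn[of b] b0 by (simp add: mult_le_one)
          also have "1 \<le> w rs" using wrs A0_ge1 by simp
          finally show ?thesis unfolding w_def U_def .
        qed
      qed
    qed
  qed
qed

lemma pow_help: "0 < s \<Longrightarrow> real (N - 1) * s ^ (N - 1 - 1) = (real N - 1) * s ^ (N - 1) / s"
proof -
  assume s: "0 < s"
  show ?thesis
  proof (cases "N = 1")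
    case True then show ?thesis by simp
  next
    case False
    then obtain k where k: "N = Suc (Suc k)" using N_ge by (metis Suc_le_D not_less_eq_eq Suc_le_mono le_antisym One_nat_def nat.exhaust)
    show ?thesis using s unfolding k by (simp add: field_simps)
  qed
qed

lemma v_bound_pos:
  assumes M: "M \<ge> 0" and r: "0 < r"
  shows "- u1 r \<le> 2 ^ (N - 1) * A0 * r powr (- bb - 1)"
proof -
  define h where "h = (\<lambda>s. s ^ (N - 1) * u1 s)"
  have hmono: "h t \<le> h s" if st: "r \<le> s" "s \<le> t" for s t
  proof (unfold h_def, rule DERIV_nonpos_imp_decreasing_open[where f = "\<lambda>s. s ^ (N - 1) * u1 s", OF st(2)])
    fix x assume x: "s < x" "x < t"
    then have x0: "0 < x" using r st by simp
    have d: "((\<lambda>s. s ^ (N - 1) * u1 s) has_real_derivative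
            (real (N - 1) * x ^ (N - 1 - 1) * u1 x + x ^ (N - 1) * u2 x)) (at x)"
      by (rule DERIV_cong[OF DERIV_mult[OF DERIV_pow D2[OF x0]]]) (simp add: algebra_simps)
    have "real (N - 1) * x ^ (N - 1 - 1) * u1 x + x ^ (N - 1) * u2 x
        = - (x ^ (N - 1) * (u x powr p + M * \<bar>u1 x\<bar> powr q))"
      unfolding pow_help[OF x0] u2_eq[OF x0] using x0 by (simp add: field_simps)
    also have "\<dots> \<le> 0" using M x0 by (simp add: mult_nonneg_nonneg add_nonneg_nonneg)
    finally show "\<exists>y. ((\<lambda>s. s ^ (N - 1) * u1 s) has_real_derivative y) (at x) \<and> y \<le> 0"
      using d by blast
  next
    show "continuous_on {s..t} (\<lambda>s. s ^ (N - 1) * u1 s)"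
      by (intro continuous_intros continuous_on_subset[OF cont_u1]) (use r st in auto)
  qed
  define k where "k = - u1 r / 2 ^ (N - 1)"
  have vk: "- u1 s \<ge> k" if s: "r \<le> s" "s \<le> 2 * r" for s
  proof -
    have "h s \<le> h r" using hmono[of r s] s by simp
    then have a: "r ^ (N - 1) * (- u1 r) \<le> s ^ (N - 1) * (- u1 s)" unfolding h_def by simp
    have "s ^ (N - 1) \<le> (2 * r) ^ (N - 1)" using s r by (intro power_mono) auto
    then have "s ^ (N - 1) * (- u1 s) \<le> (2 * r) ^ (N - 1) * (- u1 s)"
      using u1_nonpos[of s] s r by (intro mult_right_mono) auto
    with a have "r ^ (N - 1) * (- u1 r) \<le> r ^ (N - 1) * (2 ^ (N - 1) * (- u1 s))"
      by (simp add: power_mult_distrib mult_ac)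
    then have "- u1 r \<le> 2 ^ (N - 1) * (- u1 s)" using r by simp
    then show ?thesis unfolding k_def by (simp add: field_simps)
  qed
  have "(\<lambda>s. u s + k * s) (2 * r) \<le> (\<lambda>s. u s + k * s) r"
  proof (rule DERIV_nonpos_imp_decreasing_open[where f = "\<lambda>s. u s + k * s"])
    show "r \<le> 2 * r" using r by simp
    fix x assume x: "r < x" "x < 2 * r"
    then have x0: "0 < x" using r by simp
    have "((\<lambda>s. u s + k * s) has_real_derivative (u1 x + k * 1)) (at x)"
      by (intro DERIV_add D1[OF x0] DERIV_cmult DERIV_ident)
    moreover have "u1 x + k * 1 \<le> 0" using vk[of x] x by simp
    ultimately show "\<exists>y. ((\<lambda>s. u s + k * s) has_real_derivative y) (at x) \<and> y \<le> 0" by blast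
  next
    show "continuous_on {r..2 * r} (\<lambda>s. u s + k * s)"
      by (intro continuous_intros continuous_on_subset[OF cont_u]) (use r in auto)
  qed
  then have "k * r \<le> u r - u (2 * r)" by simp
  also have "\<dots> \<le> A0 * r powr (- bb)" using u_bound[OF r] unn[of "2 * r"] r by simp
  finally have "- u1 r \<le> 2 ^ (N - 1) * (A0 * r powr (- bb)) / r"
    unfolding k_def using r by (simp add: field_simps)
  also have "\<dots> = 2 ^ (N - 1) * A0 * r powr (- bb - 1)"
    using r by (simp add: powr_diff field_simps)
  finally show ?thesis .
qed

lemma v_bound_neg:
  assumes M: "M \<le> 0" and r: "0 < r"
  shows "- u1 r \<le> (2 powr (bb + 1) * A0 + A0 powr p * 2 powr (bb * p)) * r powr (- bb - 1)"
proof -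
  define K where "K = A0 powr p * (r / 2) powr (- (bb * p))"
  have up: "- u2 s \<le> K" if s: "r / 2 \<le> s" "s \<le> r" for s
  proof -
    have s0: "0 < s" using s r by simp
    have t1: "(real N - 1) / s * u1 s \<le> 0"
      using N_ge s0 u1_nonpos[of s] by (intro mult_nonneg_nonpos divide_nonneg_pos) auto
    have t2: "M * \<bar>u1 s\<bar> powr q \<le> 0" using M by (simp add: mult_nonpos_nonneg)
    have "u s powr p \<le> (A0 * s powr (- bb)) powr p"
      using u_bound[OF s0] unn[of s] s0 p_gt by (intro powr_mono2) auto
    also have "\<dots> = A0 powr p * s powr (- (bb * p))"
      using A0_ge1 s0 by (simp add: powr_mult powr_powr)
    also have "\<dots> \<le> A0 powr p * (r / 2) powr (- (bb * p))"
      using s r bb_pos p_gt by (intro mult_left_mono powr_mono2') auto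
    finally have t3: "u s powr p \<le> K" unfolding K_def .
    have "- u2 s = (real N - 1) / s * u1 s + u s powr p + M * \<bar>u1 s\<bar> powr q"
    proof -
      have "- (real N - 1) / s * u1 s = - ((real N - 1) / s * u1 s)"
        by (simp only: minus_divide_left[symmetric] mult_minus_left)
      then show ?thesis using u2_eq[OF s0] by linarith
    qed
    then show ?thesis using t1 t2 t3 by linarith
  qed
  have vs: "- u1 s \<ge> - u1 r - K * (r / 2)" if s: "r / 2 \<le> s" "s \<le> r" for s
  proof -
    have "(\<lambda>s. - u1 s - K * s) r \<le> (\<lambda>s. - u1 s - K * s) s"
    proof (rule DERIV_nonpos_imp_decreasing_open[where f = "\<lambda>s. - u1 s - K * s"])
      show "s \<le> r" using s by simp
      fix x assume x: "s < x" "x < r"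
      then have x0: "0 < x" using r s by simp
      have "((\<lambda>s. - u1 s - K * s) has_real_derivative (- u2 x - K * 1)) (at x)"
        by (intro DERIV_diff DERIV_minus D2[OF x0] DERIV_cmult DERIV_ident)
      moreover have "- u2 x - K * 1 \<le> 0" using up[of x] x s by simp
      ultimately show "\<exists>y. ((\<lambda>s. - u1 s - K * s) has_real_derivative y) (at x) \<and> y \<le> 0" by blast
    next
      show "continuous_on {s..r} (\<lambda>s. - u1 s - K * s)"
        by (intro continuous_intros continuous_on_subset[OF cont_u1]) (use r s in auto)
    qed
    then have "- u1 s \<ge> - u1 r - K * (r - s)" by (simp add: algebra_simps)
    moreover have "K * (r - s) \<le> K * (r / 2)"
      using s unfolding K_def by (intro mult_left_mono) auto
    ultimately show ?thesis by linarith
  qed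
  define k where "k = - u1 r - K * (r / 2)"
  have "(\<lambda>s. u s + k * s) r \<le> (\<lambda>s. u s + k * s) (r / 2)"
  proof (rule DERIV_nonpos_imp_decreasing_open[where f = "\<lambda>s. u s + k * s"])
    show "r / 2 \<le> r" using r by simp
    fix x assume x: "r / 2 < x" "x < r"
    then have x0: "0 < x" using r by simp
    have "((\<lambda>s. u s + k * s) has_real_derivative (u1 x + k * 1)) (at x)"
      by (intro DERIV_add D1[OF x0] DERIV_cmult DERIV_ident)
    moreover have "u1 x + k * 1 \<le> 0" using vs[of x] x unfolding k_def by simp
    ultimately show "\<exists>y. ((\<lambda>s. u s + k * s) has_real_derivative y) (at x) \<and> y \<le> 0" by blast
  next
    show "continuous_on {r / 2..r} (\<lambda>s. u s + k * s)"
      by (intro continuous_intros continuous_on_subset[OF cont_u]) (use r in auto)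
  qed
  then have "k * (r / 2) \<le> u (r / 2) - u r" by (simp add: algebra_simps)
  also have "\<dots> \<le> A0 * (r / 2) powr (- bb)" using u_bound[of "r / 2"] unn[of r] r by simp
  finally have kk: "k * (r / 2) \<le> A0 * (r / 2) powr (- bb)" .
  have e1: "(r / 2) powr (- bb) = 2 powr bb * r powr (- bb)"
    using r by (simp add: powr_minus powr_divide field_simps)
  have e2: "(r / 2) powr (- (bb * p)) = 2 powr (bb * p) * r powr (- (bb * p))"
    using r by (simp add: powr_minus powr_divide field_simps)
  have bp: "bb * p = bb + 2" using p_gt by (simp add: bb_def field_simps)
  have e3: "r powr (- (bb * p)) * r = r powr (- bb - 1)"
  proof -
    have ee: "- (bb * p) + 1 = - bb - 1" using bp by linarith
    have "r powr (- bb - 1) = r powr (- (bb * p) + 1)" by (simp only: ee)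
    also have "\<dots> = r powr (- (bb * p)) * r powr 1" by (rule powr_add)
    finally show ?thesis using r by simp
  qed
  have e4: "r powr (- bb) / r = r powr (- bb - 1)" using r by (simp add: powr_diff)
  have "- u1 r = k + K * (r / 2)" unfolding k_def by simp
  also have "k \<le> 2 * A0 * (r / 2) powr (- bb) / r" using kk r by (simp add: field_simps)
  also have "2 * A0 * (r / 2) powr (- bb) / r = 2 powr (bb + 1) * A0 * r powr (- bb - 1)"
    unfolding e1 e4[symmetric] by (simp add: powr_add)
  also have "K * (r / 2) \<le> A0 powr p * 2 powr (bb * p) * r powr (- bb - 1)"
  proof -
    have "K * (r / 2) = A0 powr p * 2 powr (bb * p) * (r powr (- (bb * p)) * r) / 2"
      unfolding K_def e2 by simp
    also have "\<dots> \<le> A0 powr p * 2 powr (bb * p) * (r powr (- (bb * p)) * r)" using r by simp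
    finally show ?thesis unfolding e3 .
  qed
  finally show ?thesis by (simp add: algebra_simps)
qed

definition "Cc = 2 ^ (N - 1) * A0 + 2 powr (bb + 1) * A0 + A0 powr p * 2 powr (bb * p)"

lemma final:
  assumes r: "0 < r"
  shows "u r \<le> min 1 (Cc * r powr (- 2 / (p - 1))) \<and> \<bar>deriv u r\<bar> \<le> Cc * r powr (- (p + 1) / (p - 1))"
proof -
  have ex1: "- 2 / (p - 1) = - bb" by (simp add: bb_def)
  have ex2: "- (p + 1) / (p - 1) = - bb - 1" using p_gt by (simp add: bb_def field_simps)
  have A0pos: "A0 > 0" using A0_ge1 by simp
  have t2: "0 \<le> 2 powr (bb + 1) * A0" "0 \<le> A0 powr p * 2 powr (bb * p)" using A0pos by auto
  have "1 \<le> (2::real) ^ (N - 1)" by simp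
  then have t1: "A0 \<le> 2 ^ (N - 1) * A0" using A0pos by simp
  have CA: "A0 \<le> Cc" unfolding Cc_def using t1 t2 by linarith
  have "u r \<le> A0 * r powr (- bb)" by (rule u_bound[OF r])
  also have "\<dots> \<le> Cc * r powr (- bb)" using CA by (intro mult_right_mono) auto
  finally have a: "u r \<le> min 1 (Cc * r powr (- 2 / (p - 1)))" using u_le1[of r] r ex1 by simp
  have dd: "deriv u r = u1 r" by (rule DERIV_imp_deriv[OF D1[OF r]])
  have ab: "\<bar>deriv u r\<bar> = - u1 r" using dd u1_nonpos[of r] r by simp
  have "- u1 r \<le> Cc * r powr (- bb - 1)"
  proof (cases "M \<ge> 0")
    case True
    have "- u1 r \<le> 2 ^ (N - 1) * A0 * r powr (- bb - 1)" by (rule v_bound_pos[OF True r])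
    also have "\<dots> \<le> Cc * r powr (- bb - 1)"
      unfolding Cc_def using t2 by (intro mult_right_mono) auto
    finally show ?thesis .
  next
    case False
    have "- u1 r \<le> (2 powr (bb + 1) * A0 + A0 powr p * 2 powr (bb * p)) * r powr (- bb - 1)"
      by (rule v_bound_neg) (use False r in auto)
    also have "\<dots> \<le> Cc * r powr (- bb - 1)"
      unfolding Cc_def using t1 A0pos by (intro mult_right_mono) auto
    finally show ?thesis .
  qed
  then show ?thesis using a ab ex2 by simp
qed

end


definition CF :: "nat \<Rightarrow> real \<Rightarrow> real \<Rightarrow> real" where
  "CF N p M = (let bb = 2 / (p - 1); cc = 1 / (4 * \<bar>M\<bar> + 4);
      A0 = (4 * 2 powr bb / cc + 8 * real N * cc + 1) powr bb
    in 2 ^ (N - 1) * A0 + 2 powr (bb + 1) * A0 + A0 powr p * 2 powr (bb * p))"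

lemma (in gs) CF_eq: "CF N p M = Cc"
  unfolding CF_def Cc_def A0_def L0_def cc_def mm_def bb_def Let_def ..

lemma (in gs) Cc_pos: "Cc > 0"
proof -
  have A0pos: "A0 > 0" using A0_ge1 by simp
  have a: "2 ^ (N - 1) * A0 > 0" using A0pos by simp
  have b: "2 powr (bb + 1) * A0 \<ge> 0" using A0pos by simp
  have c: "A0 powr p * 2 powr (bb * p) \<ge> 0" by simp
  show ?thesis unfolding Cc_def using a b c by linarith
qed

theorem proposition2p4:
  fixes N :: nat and p M :: real
  assumes "p > 1" and "N \<ge> 1"
  shows "\<exists>c>0. \<forall>u. ground_state N p M u \<and> u 0 = 1 \<longrightarrow>
           (\<forall>r>0. u r \<le> min 1 (c * r powr (- 2 / (p - 1))) \<and>
                  \<bar>deriv u r\<bar> \<le> c * r powr (- (p + 1) / (p - 1)))"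
proof -
  have pos: "CF N p M > 0"
  proof -
    define bb :: real where "bb = 2 / (p - 1)"
    define cc :: real where "cc = 1 / (4 * \<bar>M\<bar> + 4)"
    define X :: real where "X = 4 * 2 powr bb / cc + 8 * real N * cc + 1"
    define A0 :: real where "A0 = X powr bb"
    have cc: "cc > 0" unfolding cc_def by (simp add: add_pos_nonneg)
    have "4 * 2 powr bb / cc \<ge> 0" using cc by simp
    moreover have "8 * real N * cc \<ge> 0" using cc by simp
    ultimately have "X > 0" unfolding X_def by linarith
    then have A0: "A0 > 0" unfolding A0_def by simp
    have a: "2 ^ (N - 1) * A0 > 0" using A0 by simp
    have b: "2 powr (bb + 1) * A0 \<ge> 0" using A0 by simp
    have c: "A0 powr p * 2 powr (bb * p) \<ge> 0" by simp
    have "CF N p M = 2 ^ (N - 1) * A0 + 2 powr (bb + 1) * A0 + A0 powr p * 2 powr (bb * p)"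
      unfolding CF_def Let_def bb_def cc_def X_def A0_def ..
    then show ?thesis using a b c by linarith
  qed
  have main: "\<forall>r>0. u r \<le> min 1 (CF N p M * r powr (- 2 / (p - 1))) \<and>
                  \<bar>deriv u r\<bar> \<le> CF N p M * r powr (- (p + 1) / (p - 1))"
    if gsu: "ground_state N p M u" "u 0 = 1" for u
  proof -
    obtain u1 u2 where h:
      "\<forall>r\<ge>0. u r \<ge> 0"
      "\<forall>r\<ge>0. (u has_real_derivative u1 r) (at r within {0..})"
      "\<forall>r\<ge>0. (u1 has_real_derivative u2 r) (at r within {0..})"
      "u1 0 = 0"
      "\<forall>r>0. - u2 r - (real N - 1) / r * u1 r
                 = \<bar>u r\<bar> powr (p - 1) * u r + M * \<bar>u1 r\<bar> powr (2 * p / (p + 1))"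
      using gsu(1) unfolding ground_state_def by blast
    interpret gs N p M u u1 u2
    proof (rule gs.intro)
      show "p > 1" "N \<ge> 1" using assms by auto
      show "u 0 = 1" using gsu(2) .
      show "u1 0 = 0" using h(4) .
      fix r :: real
      show "0 \<le> r \<Longrightarrow> 0 \<le> u r" using h(1) by blast
      show "0 \<le> r \<Longrightarrow> (u has_real_derivative u1 r) (at r within {0..})" using h(2) by blast
      show "0 \<le> r \<Longrightarrow> (u1 has_real_derivative u2 r) (at r within {0..})" using h(3) by blast
      show "0 < r \<Longrightarrow> - u2 r - (real N - 1) / r * u1 r
                 = \<bar>u r\<bar> powr (p - 1) * u r + M * \<bar>u1 r\<bar> powr (2 * p / (p + 1))" using h(5) by blast
    qed
    show ?thesis unfolding CF_eq using final by blast
  qed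
  show ?thesis using pos main by blast
qed

end
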